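(* Assume (A1)–(A4) below, and let $\varepsilon_\diamond$, $\alpha$, $\mathcal{E}_n$ be as below. Let $\tilde\Omega$ be the set of $\omega\in\Omega$ for which there exists $n_\omega\in\mathbb{N}_+$ with $\omega\in\mathcal{E}_n$ for all $n>n_\omega$. Let $\mathbf{a}_\star$ be the unique solution of $\mathrm{VI}(\mathbb{A},\mathbb{F})$. For any $\omega\in\tilde\Omega$ and any neighborhood $\mathcal{N}$ of $\mathbf{a}_\star$, there exists $N_\omega\in\mathbb{N}_+$ such that for all $n\ge N_\omega$ the unique solution $\mathbf{a}_{\omega,n}$ of $\mathrm{VI}(A_{\omega,n},\mathbf{F}_{\omega,n})$ satisfies $\mathbf{a}_{\omega,n}\in\mathcal{N}$. In particular $\lim_{n\to\infty}\|\mathbf{a}_{\omega,n}-\mathbf{a}_\star\|_2=0$.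
   Context: Setting. $(\Omega,\mathcal{F},\mathbb{P})$ is a probability space; $N,d\in\mathbb{N}_+$, $R>0$, $\lambda>0$. $\mathcal{X}\subseteq\mathbb{R}^{n_x}$, $\mathcal{Y}\subseteq\mathbb{R}^{n_y}$ are compact; $X:\Omega\to\mathcal{X}$, $Y:\Omega\to\mathcal{Y}$ are random variables. $\phi_1,\dots,\phi_d$ are continuous on $\mathcal{X}$, $\Phi^d(x)=[\phi_l(x)]_{l=1}^d$. $\mathbb{B}_R=\{a\in\mathbb{R}^d:\|a\|_2<R\}$, $\operatorname{cl}\mathbb{B}_R$ its closure, $\operatorname{cl}\mathbb{B}_R^N=\prod_{i=1}^N\operatorname{cl}\mathbb{B}_R\subseteq\mathbb{R}^{Nd}$. A profile $\mathbf{a}=[a^1;\dots;a^N]$, $a^i\in\mathbb{R}^d$, defines $\hat z^i(x)=\sum_l a^i_l\phi_l(x)$ and $\hat z^{-i}(x)$ (stack over $j\neq i$). $\hat{\mathcal{Z}}^i=\bigcup\{\hat z^i(\mathcal{X}):a^i\in\operatorname{cl}\mathbb{B}_R\}$, $\hat{\mathcal{Z}}=\prod_i\hat{\mathcal{Z}}^i$. Player $i$ has objective $J^i(z^i;y,z^{-i})$ (derivative $\partial J^i$ in $z^i$) and constraint $h^i:\hat{\mathcal{Z}}^i\times\mathcal{Y}\to\mathbb{R}$. $F(z;y)=[\partial J^i(z^i;y,z^{-i})]_i$; $\mathbf{F}(\mathbf{a};x,y)=[\partial J^i(\hat z^i(x);y,\hat z^{-i}(x))\Phi^d(x)]_i\in\mathbb{R}^{Nd}$;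 $\mathbb{F}^0(\mathbf{a})=\mathbb{E}[\mathbf{F}(\mathbf{a};X,Y)]$, $\mathbb{F}(\mathbf{a})=\mathbb{F}^0(\mathbf{a})+\lambda\mathbf{a}$; $\mathbf{h}^i(a^i;x,y)=h^i(\hat z^i(x);y)$; $\bar h^i(a^i)=\mathbb{E}[\mathbf{h}^i(a^i;X,Y)]$. $(X^k,Y^k)_{k\ge1}$ are i.i.d. copies of $(X,Y)$ on $\Omega$; $\mathbf{F}_{\omega,n}(\mathbf{a})=\frac1n\sum_{k=1}^n\mathbf{F}(\mathbf{a};X^k(\omega),Y^k(\omega))+\lambda\mathbf{a}$, $\mathbf{h}^i_{\omega,n}(a^i)=\frac1n\sum_{k=1}^n\mathbf{h}^i(a^i;X^k(\omega),Y^k(\omega))$. For $\varepsilon\in\mathbb{R}$: $\mathbb{A}^i_\varepsilon=\{a^i\in\operatorname{cl}\mathbb{B}_R:\bar h^i(a^i)\le\varepsilon\}$, $\mathbb{A}_\varepsilon=\prod_i\mathbb{A}^i_\varepsilon$, $\mathbb{A}=\mathbb{A}_0$; $A^i_{\omega,n}=\{a^i\in\operatorname{cl}\mathbb{B}_R:\mathbf{h}^i_{\omega,n}(a^i)\le0\}$, $A_{\omega,n}=\prod_iA^i_{\omega,n}$. For a closed convex set $K\subseteq\mathbb{R}^{Nd}$ and $G:\mathbb{R}^{Nd}\to\mathbb{R}^{Nd}$, $\mathrm{VI}(K,G)$ asks for $\mathbf{a}^*\in K$ with $\langle G(\mathbf{a}^* ),\mathbf{a}-\mathbf{a}^*\rangle\ge0$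 for all $\mathbf{a}\in K$. (A1) Each $J^i(\cdot;y,z^{-i})$ is continuously differentiable. (A2) For all $y$, $F(\cdot;y)$ is $L_F$-Lipschitz on $\hat{\mathcal{Z}}$ and each $h^i(\cdot;y)$ is $L_h$-Lipschitz on $\hat{\mathcal{Z}}^i$; some $z\in\hat{\mathcal{Z}}$ has $F(z;\mathcal{Y})$ and all $h^i(z^i;\mathcal{Y})$ bounded. (A3) For every $y$, $F(\cdot;y)$ is monotone on $\hat{\mathcal{Z}}$ ($\langle F(z_1;y)-F(z_2;y),z_1-z_2\rangle\ge0$) and each $h^i(\cdot;y)$ is convex on $\hat{\mathcal{Z}}^i$. (A4) There is $\varepsilon_h>0$ with $\{a^i\in\operatorname{cl}\mathbb{B}_R:\bar h^i(a^i)\le-\varepsilon_h\}\ne\varnothing$ for every $i$. The constant $\varepsilon_\diamond\in(0,\varepsilon_h)$: for every $\mathbf{a}\in\operatorname{cl}\mathbb{B}_R^N$, each centered random variable $W$ of the form $[\mathbf{F}(\mathbf{a};X,Y)]_l-[\mathbb{F}^0(\mathbf{a})]_l$ or $\mathbf{h}^i(a^i;X,Y)-\bar h^i(a^i)$, with variance $\sigma^2$, has rate function $I(u)=\sup_t\{tu-\log\mathbb{E}[e^{tW}]\}$ satisfying $I(u)\ge u^2/(3\sigma^2)$ for $0<u\le\varepsilon_\diamond$. Fix $0<\alpha<1/2$, $\varepsilon_n=\varepsilon_\diamond n^{-\alpha}$, and $\mathcal{E}_n=\{\omega:\|\mathbf{F}_{\omega,n}(\mathbf{a})-\mathbb{F}(\mathbf{a})\|_2<\varepsilon_n\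 \forall\mathbf{a}\in\operatorname{cl}\mathbb{B}_R^N\}\cap\{\omega:\mathbb{A}_{-\varepsilon_n}\subseteq A_{\omega,n}\subseteq\mathbb{A}_{\varepsilon_n}\}$. *)

theory Defs
  imports "HOL-Probability.Probability"
begin

definition Phi :: "('d::finite \<Rightarrow> 'x \<Rightarrow> real) \<Rightarrow> 'x \<Rightarrow> real^'d" where
  "Phi \<phi> x = (\<chi> l. \<phi> l x)"

definition zhat :: "('d::finite \<Rightarrow> 'x \<Rightarrow> real) \<Rightarrow> real^'d^'N \<Rightarrow> 'x \<Rightarrow> real^'N" where
  "zhat \<phi> a x = (\<chi> i. a$i \<bullet> Phi \<phi> x)"

definition Zhat_i :: "('d::finite \<Rightarrow> 'x \<Rightarrow> real) \<Rightarrow> 'x set \<Rightarrow> real \<Rightarrow> real set" where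
  "Zhat_i \<phi> \<X> R = {c \<bullet> Phi \<phi> x | c x. c \<in> cball 0 R \<and> x \<in> \<X>}"

definition Zhat :: "('d::finite \<Rightarrow> 'x \<Rightarrow> real) \<Rightarrow> 'x set \<Rightarrow> real \<Rightarrow> (real^'N) set" where
  "Zhat \<phi> \<X> R = {z. \<forall>i. z$i \<in> Zhat_i \<phi> \<X> R}"

definition clBN :: "real \<Rightarrow> (real^'d^'N) set" where
  "clBN R = {a. \<forall>i. a$i \<in> cball 0 R}"

definition Fz :: "('N \<Rightarrow> real^'N \<Rightarrow> 'y \<Rightarrow> real) \<Rightarrow> real^'N \<Rightarrow> 'y \<Rightarrow> real^'N" where
  "Fz dJ z y = (\<chi> i. dJ i z y)"

definition Fb :: "('d::finite \<Rightarrow> 'x \<Rightarrow> real) \<Rightarrow> ('N::finite \<Rightarrow> real^'N \<Rightarrow> 'y \<Rightarrow> real)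
    \<Rightarrow> real^'d^'N \<Rightarrow> 'x \<Rightarrow> 'y \<Rightarrow> real^'d^'N" where
  "Fb \<phi> dJ a x y = (\<chi> i. dJ i (zhat \<phi> a x) y *\<^sub>R Phi \<phi> x)"

definition hb :: "('d::finite \<Rightarrow> 'x \<Rightarrow> real) \<Rightarrow> ('N \<Rightarrow> real \<Rightarrow> 'y \<Rightarrow> real)
    \<Rightarrow> 'N \<Rightarrow> real^'d \<Rightarrow> 'x \<Rightarrow> 'y \<Rightarrow> real" where
  "hb \<phi> h i c x y = h i (c \<bullet> Phi \<phi> x) y"

definition vupd :: "real^'N \<Rightarrow> 'N \<Rightarrow> real \<Rightarrow> real^'N" where
  "vupd z i t = (\<chi> j. if j = i then t else z$j)"

definition isVI :: "('a::real_inner) set \<Rightarrow> ('a \<Rightarrow> 'a) \<Rightarrow> 'a \<Rightarrow> bool" where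
  "isVI K G a \<longleftrightarrow> a \<in> K \<and> (\<forall>b\<in>K. G a \<bullet> (b - a) \<ge> 0)"

text \<open>Cramer rate function I(u) = sup_t (t u - log E[exp(t W)]); a value t with
  E[exp(tW)] = +infinity contributes -infinity.\<close>
definition rate_fun :: "'a measure \<Rightarrow> ('a \<Rightarrow> real) \<Rightarrow> real \<Rightarrow> ereal" where
  "rate_fun M W u = (SUP t\<in>UNIV. if integrable M (\<lambda>\<omega>. exp (t * W \<omega>))
      then ereal (t * u - ln (integral\<^sup>L M (\<lambda>\<omega>. exp (t * W \<omega>)))) else -\<infinity>)"

end

theory Submission
  imports Defs
begin


lemma VI_exists:
  fixes G :: "'a::euclidean_space \<Rightarrow> 'a"
  assumes K: "compact K" "convex K" "K \<noteq> {}" and cG: "continuous_on K G"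
  shows "\<exists>a. isVI K G a"
proof -
  have cl: "closed K" using K compact_imp_closed by blast
  let ?f = "\<lambda>a. a - G a"
  have c1: "continuous_on K ?f" by (intro continuous_intros cG)
  have "continuous_on K (closest_point K \<circ> ?f)"
    by (rule continuous_on_compose[OF c1 continuous_on_closest_point[OF K(2) cl K(3)]])
  then have cg: "continuous_on K (\<lambda>a. closest_point K (a - G a))" by (simp add: o_def)
  have "(\<lambda>a. closest_point K (a - G a)) \<in> K \<rightarrow> K"
    using closest_point_in_set[OF cl K(3)] by blast
  then obtain a where a: "a \<in> K" "closest_point K (a - G a) = a"
    using brouwer[OF K cg] by blast
  have "\<forall>b\<in>K. G a \<bullet> (b - a) \<ge> 0"
  proof
    fix b assume "b \<in> K"
    from closest_point_dot[OF K(2) cl this, of "a - G a"] a(2)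
    have "((a - G a) - a) \<bullet> (b - a) \<le> 0" by simp
    then show "G a \<bullet> (b - a) \<ge> 0" by (simp add: inner_diff_left)
  qed
  then show ?thesis using a(1) unfolding isVI_def by blast
qed

lemma VI_unique:
  fixes G :: "'a::real_inner \<Rightarrow> 'a"
  assumes sm: "\<forall>a\<in>K. \<forall>b\<in>K. (G a - G b) \<bullet> (a - b) \<ge> lam * (norm (a - b))\<^sup>2"
    and lam: "lam > 0" and a: "isVI K G a" and b: "isVI K G b"
  shows "a = b"
proof -
  from a b have aK: "a \<in> K" and bK: "b \<in> K" and 1: "G a \<bullet> (b - a) \<ge> 0" and 2: "G b \<bullet> (a - b) \<ge> 0"
    unfolding isVI_def by auto
  have "(G a - G b) \<bullet> (a - b) = - (G a \<bullet> (b - a)) - G b \<bullet> (a - b)"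
    by (simp add: inner_diff_left inner_diff_right)
  also have "\<dots> \<le> 0" using 1 2 by simp
  finally have "lam * (norm (a - b))\<^sup>2 \<le> 0" using sm aK bK by fastforce
  then have "(norm (a - b))\<^sup>2 \<le> 0" using lam by (simp add: mult_le_0_iff)
  then show ?thesis by simp
qed

lemma key_estimate:
  fixes a as s b c :: "'a::real_inner"
  assumes VIn: "Gn a \<bullet> (b - a) \<ge> 0"
    and VI0: "G as \<bullet> (c - as) \<ge> 0"
    and bdef: "b = (1 - t) *\<^sub>R as + t *\<^sub>R s" and cdef: "c = (1 - t) *\<^sub>R a + t *\<^sub>R s"
    and sm: "(Gn a - Gn as) \<bullet> (a - as) \<ge> lam * (norm (a - as))\<^sup>2"
    and C: "norm (Gn a) \<le> C" and e: "norm (Gn as - G as) \<le> e"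
    and D1: "norm (a - as) \<le> D" and D2: "norm (s - as) \<le> D" and D3: "norm (s - a) \<le> D"
    and t: "0 \<le> t"
  shows "lam * (norm (a - as))\<^sup>2 \<le> t * D * C + t * D * norm (G as) + e * D"
proof -
  have bm: "b - as = t *\<^sub>R (s - as)" using bdef by (simp add: algebra_simps)
  have cm: "a - c = - (t *\<^sub>R (s - a))" using cdef by (simp add: algebra_simps)
  have "Gn a \<bullet> (a - as) = - (Gn a \<bullet> (b - a)) + Gn a \<bullet> (b - as)"
    by (simp add: inner_diff_right)
  also have "\<dots> \<le> Gn a \<bullet> (b - as)" using VIn by simp
  also have "\<dots> \<le> norm (Gn a) * norm (b - as)" by (rule norm_cauchy_schwarz)
  also have "\<dots> = norm (Gn a) * (t * norm (s - as))" using bm t by simp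
  also have "\<dots> \<le> C * (t * D)"
    by (intro mult_mono C mult_left_mono D2 t) (auto intro: order_trans[OF norm_ge_zero C] mult_nonneg_nonneg t)
  finally have I1: "Gn a \<bullet> (a - as) \<le> t * D * C" by (simp add: mult_ac)
  have E1: "- (Gn as \<bullet> (a - as)) = (G as - Gn as) \<bullet> (a - as) - G as \<bullet> (a - c) - G as \<bullet> (c - as)"
    by (simp add: inner_diff_left inner_diff_right)
  have E2: "(G as - Gn as) \<bullet> (a - as) \<le> norm (G as - Gn as) * norm (a - as)" by (rule norm_cauchy_schwarz)
  have E3: "norm (G as - Gn as) * norm (a - as) \<le> e * D" using e D1 by (metis mult_mono norm_ge_zero norm_minus_commute order_trans)
  have E4: "- (G as \<bullet> (a - c)) \<le> norm (G as) * norm (a - c)"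
    using norm_cauchy_schwarz[of "G as" "c - a"] by (simp add: inner_diff_right norm_minus_commute)
  have E5: "norm (a - c) = t * norm (s - a)" using cm t by simp
  have E6: "norm (G as) * (t * norm (s - a)) \<le> norm (G as) * (t * D)"
    by (intro mult_left_mono D3 t) auto
  have I2: "- (Gn as \<bullet> (a - as)) \<le> e * D + t * D * norm (G as)"
    using E1 E2 E3 E4 E5 E6 VI0 by (simp add: mult_ac)
  have "lam * (norm (a - as))\<^sup>2 \<le> Gn a \<bullet> (a - as) - Gn as \<bullet> (a - as)"
    using sm by (simp add: inner_diff_left)
  then show ?thesis using I1 I2 by linarith
qed



lemma Phi_cont: "\<forall>l. continuous_on X (\<phi> l) \<Longrightarrow> continuous_on X (Phi \<phi>)"
  unfolding Phi_def[abs_def] by (intro continuous_on_vec_lambda) auto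

lemma Phi_bound:
  assumes "compact X" "\<forall>l. continuous_on X (\<phi> l)"
  shows "\<exists>P>0. \<forall>x\<in>X. norm (Phi \<phi> x) \<le> P"
proof -
  have "compact (Phi \<phi> ` X)" using compact_continuous_image[OF Phi_cont[OF assms(2)] assms(1)] .
  then have "bounded (Phi \<phi> ` X)" by (rule compact_imp_bounded)
  then show ?thesis unfolding bounded_pos by auto
qed

lemma inner_Phi_in: "c \<in> cball 0 R \<Longrightarrow> x \<in> X \<Longrightarrow> c \<bullet> Phi \<phi> x \<in> Zhat_i \<phi> X R"
  unfolding Zhat_i_def by blast

lemma zhat_in: "a \<in> clBN R \<Longrightarrow> x \<in> X \<Longrightarrow> zhat \<phi> a x \<in> Zhat \<phi> X R"
  unfolding Zhat_def zhat_def clBN_def by (auto intro: inner_Phi_in)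

lemma norm_vec_le_sum: "norm (x::('a::real_normed_vector)^'n) \<le> (\<Sum>i\<in>UNIV. norm (x$i))"
  by (simp add: norm_vec_def L2_set_le_sum)

lemma Zhat_i_bound:
  assumes P: "\<forall>x\<in>X. norm (Phi \<phi> x) \<le> P" and t: "t \<in> Zhat_i \<phi> X R"
  shows "\<bar>t\<bar> \<le> R * P"
proof -
  obtain c x where t: "t = c \<bullet> Phi \<phi> x" and c: "c \<in> cball 0 R" and x: "x \<in> X"
    using t unfolding Zhat_i_def by blast
  have "\<bar>t\<bar> \<le> norm c * norm (Phi \<phi> x)" unfolding t by (rule Cauchy_Schwarz_ineq2)
  also have "\<dots> \<le> R * P" using c P x by (intro mult_mono) (auto intro: order_trans[OF norm_ge_zero])
  finally show ?thesis .
qed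

lemma Zhat_bound:
  assumes P: "\<forall>x\<in>X. norm (Phi \<phi> x) \<le> P" and z: "(z::real^'N) \<in> Zhat \<phi> X R"
  shows "norm z \<le> real CARD('N) * (R * P)"
proof -
  have "norm z \<le> (\<Sum>i\<in>UNIV. norm (z$i))" by (rule norm_vec_le_sum)
  also have "\<dots> \<le> (\<Sum>i\<in>(UNIV::'N set). R * P)"
    using z Zhat_i_bound[OF P] unfolding Zhat_def by (intro sum_mono) auto
  finally show ?thesis by simp
qed

lemma Fb_inner:
  "(Fb \<phi> dJ a x y - Fb \<phi> dJ b x y) \<bullet> (a - b)
   = (Fz dJ (zhat \<phi> a x) y - Fz dJ (zhat \<phi> b x) y) \<bullet> (zhat \<phi> a x - zhat \<phi> b x)"
proof -
  have 1: "(Fb \<phi> dJ a x y - Fb \<phi> dJ b x y) \<bullet> (a - b)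
     = (\<Sum>i\<in>UNIV. (Fb \<phi> dJ a x y - Fb \<phi> dJ b x y) $ i \<bullet> (a - b) $ i)"
    by (rule inner_vec_def)
  have 2: "(Fz dJ (zhat \<phi> a x) y - Fz dJ (zhat \<phi> b x) y) \<bullet> (zhat \<phi> a x - zhat \<phi> b x)
     = (\<Sum>i\<in>UNIV. (Fz dJ (zhat \<phi> a x) y - Fz dJ (zhat \<phi> b x) y) $ i * (zhat \<phi> a x - zhat \<phi> b x) $ i)"
    by (simp add: inner_vec_def)
  have 3: "(Fb \<phi> dJ a x y - Fb \<phi> dJ b x y) $ i \<bullet> (a - b) $ i
     = (Fz dJ (zhat \<phi> a x) y - Fz dJ (zhat \<phi> b x) y) $ i * (zhat \<phi> a x - zhat \<phi> b x) $ i" for i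
  proof -
    have e1: "(Fb \<phi> dJ a x y - Fb \<phi> dJ b x y) $ i = (dJ i (zhat \<phi> a x) y - dJ i (zhat \<phi> b x) y) *\<^sub>R Phi \<phi> x"
      by (simp add: Fb_def scaleR_diff_left)
    have e2: "(Fz dJ (zhat \<phi> a x) y - Fz dJ (zhat \<phi> b x) y) $ i = dJ i (zhat \<phi> a x) y - dJ i (zhat \<phi> b x) y"
      by (simp add: Fz_def)
    have e3: "(zhat \<phi> a x - zhat \<phi> b x) $ i = (a - b) $ i \<bullet> Phi \<phi> x"
      by (simp add: zhat_def inner_diff_left)
    show ?thesis unfolding e1 e2 e3 inner_scaleR_left using inner_commute[of "Phi \<phi> x" "(a - b) $ i"] by (simp only:)
  qed
  show ?thesis unfolding 1 2 by (rule sum.cong[OF refl 3])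
qed

lemma Fb_mono:
  assumes "a \<in> clBN R" "b \<in> clBN R" "x \<in> X" "y \<in> Y"
    and A3: "\<forall>y\<in>Y. \<forall>z1\<in>Zhat \<phi> X R. \<forall>z2\<in>Zhat \<phi> X R. (Fz dJ z1 y - Fz dJ z2 y) \<bullet> (z1 - z2) \<ge> 0"
  shows "(Fb \<phi> dJ a x y - Fb \<phi> dJ b x y) \<bullet> (a - b) \<ge> 0"
  unfolding Fb_inner by (rule A3[rule_format, OF assms(4) zhat_in[OF assms(1,3)] zhat_in[OF assms(2,3)]])

lemma Fb_bound:
  fixes dJ :: "'N::finite \<Rightarrow> real^'N \<Rightarrow> 'y \<Rightarrow> real" and \<phi> :: "'d::finite \<Rightarrow> 'x \<Rightarrow> real"
  assumes P: "\<forall>x\<in>X. norm (Phi \<phi> x) \<le> P" and P0: "P \<ge> 0"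
    and A2_F: "\<forall>y\<in>Y. lipschitz_on LF (Zhat \<phi> X R) (\<lambda>z. Fz dJ z y)"
    and A2_bdd: "\<exists>z\<in>Zhat \<phi> X R. bounded ((\<lambda>y. Fz dJ z y) ` Y)"
  shows "\<exists>C. \<forall>a\<in>(clBN R :: (real^'d^'N) set). \<forall>x\<in>X. \<forall>y\<in>Y. norm (Fb \<phi> dJ a x y) \<le> C"
proof -
  obtain z0 where z0: "z0 \<in> Zhat \<phi> X R" and bd: "bounded ((\<lambda>y. Fz dJ z0 y) ` Y)"
    using A2_bdd by blast
  obtain B where B: "\<forall>y\<in>Y. norm (Fz dJ z0 y) \<le> B" using bd unfolding bounded_iff by blast
  define Z where "Z = real CARD('N) * (R * P)"
  have Fzb: "norm (Fz dJ z y) \<le> B + LF * (2 * Z)" if z: "z \<in> Zhat \<phi> X R" and y: "y \<in> Y" for z y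
  proof -
    have lip: "lipschitz_on LF (Zhat \<phi> X R) (\<lambda>z. Fz dJ z y)" using A2_F y by blast
    have L0: "LF \<ge> 0" by (rule lipschitz_on_nonneg[OF lip])
    have L: "dist (Fz dJ z y) (Fz dJ z0 y) \<le> LF * dist z z0"
      using lipschitz_onD[OF lip z z0] by simp
    have d1: "dist z z0 \<le> norm z + norm z0" by (simp add: dist_norm norm_triangle_ineq4)
    have d2: "norm z \<le> Z" "norm z0 \<le> Z" using Zhat_bound[OF P z] Zhat_bound[OF P z0] unfolding Z_def by auto
    have "LF * dist z z0 \<le> LF * (2 * Z)" by (rule mult_left_mono[OF _ L0]) (use d1 d2 in linarith)
    moreover have "norm (Fz dJ z y) \<le> norm (Fz dJ z0 y) + dist (Fz dJ z y) (Fz dJ z0 y)"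
      using norm_triangle_sub[of "Fz dJ z y" "Fz dJ z0 y"] by (simp add: dist_norm)
    moreover have "norm (Fz dJ z0 y) \<le> B" using B y by blast
    ultimately show ?thesis using L by linarith
  qed
  define K where "K = B + LF * (2 * Z)"
  have K0: "0 \<le> K" if y: "y \<in> Y" and z: "z \<in> Zhat \<phi> X R" for y and z :: "real^'N"
    using Fzb[OF z y] norm_ge_zero[of "Fz dJ z y"] unfolding K_def by linarith
  have comp: "norm (Fb \<phi> dJ a x y $ i) \<le> K * P"
    if a: "a \<in> clBN R" and x: "x \<in> X" and y: "y \<in> Y" for a :: "real^'d^'N" and x y i
  proof -
    have z: "zhat \<phi> a x \<in> Zhat \<phi> X R" using zhat_in[OF a x] .
    have e1: "norm (Fb \<phi> dJ a x y $ i) = \<bar>dJ i (zhat \<phi> a x) y\<bar> * norm (Phi \<phi> x)"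
      unfolding Fb_def by simp
    have e2: "\<bar>dJ i (zhat \<phi> a x) y\<bar> \<le> norm (Fz dJ (zhat \<phi> a x) y)"
      using component_le_norm_cart[of "Fz dJ (zhat \<phi> a x) y" i] unfolding Fz_def by simp
    have e3: "\<bar>dJ i (zhat \<phi> a x) y\<bar> \<le> K" using e2 Fzb[OF z y] unfolding K_def by linarith
    have e4: "norm (Phi \<phi> x) \<le> P" using P x by blast
    have "\<bar>dJ i (zhat \<phi> a x) y\<bar> * norm (Phi \<phi> x) \<le> K * P"
      by (rule mult_mono[OF e3 e4 K0[OF y z] norm_ge_zero])
    then show ?thesis using e1 by simp
  qed
  have bnd: "norm (Fb \<phi> dJ a x y) \<le> real CARD('N) * (K * P)"
    if a: "a \<in> clBN R" and x: "x \<in> X" and y: "y \<in> Y" for a :: "real^'d^'N" and x y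
  proof -
    have "norm (Fb \<phi> dJ a x y) \<le> (\<Sum>i\<in>UNIV. norm (Fb \<phi> dJ a x y $ i))" by (rule norm_vec_le_sum)
    also have "\<dots> \<le> (\<Sum>i\<in>(UNIV::'N set). K * P)"
      by (rule sum_mono) (rule comp[OF a x y])
    also have "\<dots> = real CARD('N) * (K * P)" by simp
    finally show ?thesis .
  qed
  show ?thesis by (rule exI[of _ "real CARD('N) * (K * P)"], intro ballI, rule bnd)
qed

lemma comp_inner_cont: "continuous_on S (\<lambda>a::real^'d^'N. a $ i \<bullet> v)"
  by (rule continuous_on_inner[OF continuous_on_component[OF continuous_on_id] continuous_on_const])

lemma zhat_cont: "continuous_on S (\<lambda>a. zhat \<phi> a x)"
  unfolding zhat_def by (rule continuous_on_vec_lambda, rule comp_inner_cont)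

lemma Fb_cont:
  assumes x: "x \<in> X" and lip: "lipschitz_on LF (Zhat \<phi> X R) (\<lambda>z. Fz dJ z y)"
  shows "continuous_on (clBN R) (\<lambda>a. Fb \<phi> dJ a x y)"
proof -
  have c: "continuous_on (clBN R) (\<lambda>a. Fz dJ (zhat \<phi> a x) y)"
    by (rule continuous_on_compose2[OF lipschitz_on_continuous_on[OF lip] zhat_cont]) (rule image_subsetI, rule zhat_in[OF _ x])
  have eq: "(\<lambda>a. Fb \<phi> dJ a x y) = (\<lambda>a. \<chi> i. (Fz dJ (zhat \<phi> a x) y $ i) *\<^sub>R Phi \<phi> x)"
    unfolding Fb_def Fz_def by simp
  show ?thesis unfolding eq
    by (rule continuous_on_vec_lambda, rule continuous_on_scaleR[OF continuous_on_component[OF c] continuous_on_const])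
qed

lemma hb_cont:
  assumes x: "x \<in> X" and lip: "lipschitz_on L (Zhat_i \<phi> X R) (\<lambda>t. h i t y)"
  shows "continuous_on (cball 0 R) (\<lambda>c. hb \<phi> h i c x y)"
  unfolding hb_def
  by (rule continuous_on_compose2[OF lipschitz_on_continuous_on[OF lip]
        continuous_on_inner[OF continuous_on_id continuous_on_const]])
     (rule image_subsetI, rule inner_Phi_in[OF _ x])

lemma hb_convex:
  assumes x: "x \<in> X" and cv: "convex_on (Zhat_i \<phi> X R) (\<lambda>t. h i t y)"
    and c: "c \<in> cball 0 R" and d: "d \<in> cball 0 R" and u: "0 \<le> u" "u \<le> 1"
  shows "hb \<phi> h i ((1 - u) *\<^sub>R c + u *\<^sub>R d) x y \<le> (1 - u) * hb \<phi> h i c x y + u * hb \<phi> h i d x y"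
proof -
  have "((1 - u) *\<^sub>R c + u *\<^sub>R d) \<bullet> Phi \<phi> x = (1 - u) *\<^sub>R (c \<bullet> Phi \<phi> x) + u *\<^sub>R (d \<bullet> Phi \<phi> x)"
    by (simp add: inner_add_left)
  then show ?thesis unfolding hb_def
    using convex_onD[OF cv u inner_Phi_in[OF c x] inner_Phi_in[OF d x]] by simp
qed



lemma clBN_norm: "a \<in> clBN R \<Longrightarrow> norm (a :: real^'d^'N) \<le> real CARD('N) * R"
proof -
  assume a: "a \<in> clBN R"
  have "norm a \<le> (\<Sum>i\<in>UNIV. norm (a$i))" by (rule norm_vec_le_sum)
  also have "\<dots> \<le> (\<Sum>i\<in>(UNIV::'N set). R)" using a unfolding clBN_def by (intro sum_mono) simp
  finally show ?thesis by simp
qed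

lemma clBN_closed: "closed (clBN R :: (real^'d^'N) set)"
proof -
  have "clBN R = (\<Inter>i. UNIV \<inter> (\<lambda>a::real^'d^'N. a$i) -` cball 0 R)" unfolding clBN_def by auto
  moreover have "closed (UNIV \<inter> (\<lambda>a::real^'d^'N. a$i) -` cball 0 R)" for i
    by (rule continuous_closed_preimage[OF continuous_on_component[OF continuous_on_id] closed_UNIV closed_cball])
  ultimately show ?thesis by (simp add: closed_INT)
qed

lemma clBN_bounded: "bounded (clBN R :: (real^'d^'N) set)"
  unfolding bounded_iff using clBN_norm by blast

lemma clBN_comp: "a \<in> clBN R \<Longrightarrow> a $ i \<in> cball 0 R"
  unfolding clBN_def by simp

theorem theorem3:
  fixes M :: "'w measure"
    and X :: "'w \<Rightarrow> 'x::euclidean_space" and Y :: "'w \<Rightarrow> 'y::euclidean_space"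
    and Xs :: "nat \<Rightarrow> 'w \<Rightarrow> 'x" and Ys :: "nat \<Rightarrow> 'w \<Rightarrow> 'y"
    and \<X> :: "'x set" and \<Y> :: "'y set"
    and \<phi> :: "'d::finite \<Rightarrow> 'x \<Rightarrow> real"
    and J :: "'N::finite \<Rightarrow> real^'N \<Rightarrow> 'y \<Rightarrow> real"
    and dJ :: "'N \<Rightarrow> real^'N \<Rightarrow> 'y \<Rightarrow> real"
    and h :: "'N \<Rightarrow> real \<Rightarrow> 'y \<Rightarrow> real"
    and R lam LF Lh eps_h eps_d alpha :: real
    and a_star :: "real^'d^'N"
    and F0 FF hbar Fs hs AA As epsn En Omega_t
  assumes F0_def: "F0 = (\<lambda>a. integral\<^sup>L M (\<lambda>\<omega>. Fb \<phi> dJ a (X \<omega>) (Y \<omega>)))"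
    and FF_def: "FF = (\<lambda>a. F0 a + lam *\<^sub>R a)"
    and hbar_def: "hbar = (\<lambda>i c. integral\<^sup>L M (\<lambda>\<omega>. hb \<phi> h i c (X \<omega>) (Y \<omega>)))"
    and Fs_def: "Fs = (\<lambda>\<omega> n a. (1 / real n) *\<^sub>R (\<Sum>k\<in>{1..n}. Fb \<phi> dJ a (Xs k \<omega>) (Ys k \<omega>)) + lam *\<^sub>R a)"
    and hs_def: "hs = (\<lambda>\<omega> n i c. (1 / real n) * (\<Sum>k\<in>{1..n}. hb \<phi> h i c (Xs k \<omega>) (Ys k \<omega>)))"
    and AA_def: "AA = (\<lambda>e. {a::real^'d^'N. \<forall>i. a$i \<in> cball 0 R \<and> hbar i (a$i) \<le> e})"
    and As_def: "As = (\<lambda>\<omega> n. {a::real^'d^'N. \<forall>i. a$i \<in> cball 0 R \<and> hs \<omega> n i (a$i) \<le> 0})"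
    and epsn_def: "epsn = (\<lambda>n::nat. eps_d * real n powr (- alpha))"
    and En_def: "En = (\<lambda>n. {\<omega> \<in> space M. (\<forall>a\<in>clBN R. norm (Fs \<omega> n a - FF a) < epsn n)
                  \<and> AA (- epsn n) \<subseteq> As \<omega> n \<and> As \<omega> n \<subseteq> AA (epsn n)})"
    and Omega_t_def: "Omega_t = {\<omega> \<in> space M. \<exists>n\<^sub>\<omega>::nat. n\<^sub>\<omega> \<ge> 1 \<and> (\<forall>n>n\<^sub>\<omega>. \<omega> \<in> En n)}"
    and M: "prob_space M"
    and X_rv: "X \<in> borel_measurable M" and Y_rv: "Y \<in> borel_measurable M"
    and X_in: "\<forall>\<omega>\<in>space M. X \<omega> \<in> \<X>" and Y_in: "\<forall>\<omega>\<in>space M. Y \<omega> \<in> \<Y>"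
    and cX: "compact \<X>" and cY: "compact \<Y>"
    and phi_cont: "\<forall>l. continuous_on \<X> (\<phi> l)"
    and R_pos: "0 < R" and lam_pos: "0 < lam"
    (* i.i.d. copies *)
    and Xs_rv: "\<forall>k. Xs k \<in> borel_measurable M" and Ys_rv: "\<forall>k. Ys k \<in> borel_measurable M"
    and Xs_in: "\<forall>k. \<forall>\<omega>\<in>space M. Xs k \<omega> \<in> \<X>" and Ys_in: "\<forall>k. \<forall>\<omega>\<in>space M. Ys k \<omega> \<in> \<Y>"
    and indep: "prob_space.indep_vars M (\<lambda>_. borel) (\<lambda>k \<omega>. (Xs k \<omega>, Ys k \<omega>)) {1..}"
    and ident: "\<forall>k\<ge>1. distr M borel (\<lambda>\<omega>. (Xs k \<omega>, Ys k \<omega>)) = distr M borel (\<lambda>\<omega>. (X \<omega>, Y \<omega>))"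
    (* expectations are well defined *)
    and F_int: "\<forall>a\<in>clBN R. integrable M (\<lambda>\<omega>. Fb \<phi> dJ a (X \<omega>) (Y \<omega>))"
    and h_int: "\<forall>i. \<forall>c\<in>cball 0 R. integrable M (\<lambda>\<omega>. hb \<phi> h i c (X \<omega>) (Y \<omega>))"
    (* (A1) *)
    and A1: "\<forall>i z y. y \<in> \<Y> \<longrightarrow>
               ((\<lambda>t. J i (vupd z i t) y) has_real_derivative dJ i z y) (at (z$i))
             \<and> continuous_on UNIV (\<lambda>t. dJ i (vupd z i t) y)"
    (* (A2) *)
    and A2_F: "\<forall>y\<in>\<Y>. lipschitz_on LF (Zhat \<phi> \<X> R) (\<lambda>z. Fz dJ z y)"
    and A2_h: "\<forall>y\<in>\<Y>. \<forall>i. lipschitz_on Lh (Zhat_i \<phi> \<X> R) (\<lambda>t. h i t y)"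
    and A2_bdd: "\<exists>z\<in>Zhat \<phi> \<X> R. bounded ((\<lambda>y. Fz dJ z y) ` \<Y>)
                   \<and> (\<forall>i. bounded ((\<lambda>y. h i (z$i) y) ` \<Y>))"
    (* (A3) *)
    and A3_F: "\<forall>y\<in>\<Y>. \<forall>z1\<in>Zhat \<phi> \<X> R. \<forall>z2\<in>Zhat \<phi> \<X> R.
                 (Fz dJ z1 y - Fz dJ z2 y) \<bullet> (z1 - z2) \<ge> 0"
    and A3_h: "\<forall>y\<in>\<Y>. \<forall>i. convex_on (Zhat_i \<phi> \<X> R) (\<lambda>t. h i t y)"
    (* (A4) *)
    and eps_h_pos: "0 < eps_h"
    and A4: "\<forall>i. {c \<in> cball 0 R. hbar i c \<le> - eps_h} \<noteq> {}"
    (* the constant eps_diamond *)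
    and eps_d: "0 < eps_d" "eps_d < eps_h"
    and rate_F: "\<forall>a\<in>clBN R. \<forall>i l.
        let W = (\<lambda>\<omega>. (Fb \<phi> dJ a (X \<omega>) (Y \<omega>))$i$l - (F0 a)$i$l) in
        \<forall>u. 0 < u \<and> u \<le> eps_d \<longrightarrow>
          rate_fun M W u \<ge> ereal (u\<^sup>2 / (3 * integral\<^sup>L M (\<lambda>\<omega>. (W \<omega> - integral\<^sup>L M W)\<^sup>2)))"
    and rate_h: "\<forall>a\<in>clBN R. \<forall>i.
        let W = (\<lambda>\<omega>. hb \<phi> h i (a$i) (X \<omega>) (Y \<omega>) - hbar i (a$i)) in
        \<forall>u. 0 < u \<and> u \<le> eps_d \<longrightarrow>
          rate_fun M W u \<ge> ereal (u\<^sup>2 / (3 * integral\<^sup>L M (\<lambda>\<omega>. (W \<omega> - integral\<^sup>L M W)\<^sup>2)))"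
    and alpha: "0 < alpha" "alpha < 1/2"
    (* a_star solves VI(A, F) *)
    and a_star: "isVI (AA 0) FF a_star"
  shows "\<forall>\<omega>\<in>Omega_t.
           (\<forall>S. open S \<and> a_star \<in> S \<longrightarrow>
              (\<exists>N\<^sub>\<omega>::nat. N\<^sub>\<omega> \<ge> 1 \<and> (\<forall>n\<ge>N\<^sub>\<omega>.
                  (\<exists>!a. isVI (As \<omega> n) (Fs \<omega> n) a)
                \<and> (\<forall>a. isVI (As \<omega> n) (Fs \<omega> n) a \<longrightarrow> a \<in> S))))
         \<and> (\<lambda>n. norm ((THE a. isVI (As \<omega> n) (Fs \<omega> n) a) - a_star)) \<longlonglongrightarrow> 0"
proof -
  have sp: "space M \<noteq> {}" using M prob_space.not_empty by blast
  obtain P where P0: "P > 0" and P: "\<forall>x\<in>\<X>. norm (Phi \<phi> x) \<le> P"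
    using Phi_bound[OF cX phi_cont] by blast
  have A2_bdd': "\<exists>z\<in>Zhat \<phi> \<X> R. bounded ((\<lambda>y. Fz dJ z y) ` \<Y>)" using A2_bdd by metis
  obtain C0 where C0: "\<forall>a\<in>(clBN R :: (real^'d^'N) set). \<forall>x\<in>\<X>. \<forall>y\<in>\<Y>. norm (Fb \<phi> dJ a x y) \<le> C0"
    using Fb_bound[OF P less_imp_le[OF P0] A2_F A2_bdd'] by metis
  define DR where "DR = real CARD('N) * R"
  have nB: "norm a \<le> DR" if "a \<in> clBN R" for a :: "real^'d^'N"
    using clBN_norm[OF that] unfolding DR_def .
  define D where "D = 2 * DR"
  have nD: "norm (a - b) \<le> D" if "a \<in> clBN R" "b \<in> clBN R" for a b :: "real^'d^'N"
    using nB[OF that(1)] nB[OF that(2)] norm_triangle_ineq4[of a b] unfolding D_def by linarith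
  have "\<exists>c. c \<in> cball 0 R \<and> hbar i c \<le> - eps_h" for i
  proof -
    obtain c where "c \<in> {c \<in> cball 0 R. hbar i c \<le> - eps_h}" using A4 by (meson all_not_in_conv)
    then show ?thesis by auto
  qed
  then obtain sf where sf: "\<And>i. sf i \<in> cball 0 R \<and> hbar i (sf i) \<le> - eps_h"
    by metis
  define s :: "real^'d^'N" where "s = (\<chi> i. sf i)"
  have s: "s \<in> clBN R" "\<And>i. hbar i (s$i) \<le> - eps_h"
    using sf unfolding s_def clBN_def by auto
  have as: "a_star \<in> AA 0" "\<forall>b\<in>AA 0. FF a_star \<bullet> (b - a_star) \<ge> 0"
    using a_star unfolding isVI_def by auto
  have AAsub: "AA e \<subseteq> clBN R" for e unfolding AA_def clBN_def by auto
  have as_cl: "a_star \<in> clBN R" using as(1) AAsub by auto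
  have cvx: "(1 - u) *\<^sub>R c + u *\<^sub>R d \<in> cball 0 R"
    if c: "c \<in> cball 0 R" and d: "d \<in> cball 0 R" and u: "0 \<le> u" "u \<le> 1" for c d :: "real^'d" and u
    using convex_cball[of "0::real^'d" R] c d u unfolding convex_alt by simp
  have hbar_cvx: "hbar i ((1 - u) *\<^sub>R c + u *\<^sub>R d) \<le> (1 - u) * hbar i c + u * hbar i d"
    if c: "c \<in> cball 0 R" and d: "d \<in> cball 0 R" and u: "0 \<le> u" "u \<le> 1" for i c d u
  proof -
    have cd: "(1 - u) *\<^sub>R c + u *\<^sub>R d \<in> cball 0 R" by (rule cvx[OF c d u])
    have ic: "integrable M (\<lambda>\<omega>. hb \<phi> h i c (X \<omega>) (Y \<omega>))" using h_int c by simp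
    have id: "integrable M (\<lambda>\<omega>. hb \<phi> h i d (X \<omega>) (Y \<omega>))" using h_int d by simp
    have icd: "integrable M (\<lambda>\<omega>. hb \<phi> h i ((1 - u) *\<^sub>R c + u *\<^sub>R d) (X \<omega>) (Y \<omega>))" using h_int cd by simp
    have "hbar i ((1 - u) *\<^sub>R c + u *\<^sub>R d)
        \<le> integral\<^sup>L M (\<lambda>\<omega>. (1 - u) * hb \<phi> h i c (X \<omega>) (Y \<omega>) + u * hb \<phi> h i d (X \<omega>) (Y \<omega>))"
      unfolding hbar_def
    proof (rule integral_mono[OF icd])
      show "integrable M (\<lambda>\<omega>. (1 - u) * hb \<phi> h i c (X \<omega>) (Y \<omega>) + u * hb \<phi> h i d (X \<omega>) (Y \<omega>))"
        by (intro Bochner_Integration.integrable_add integrable_mult_right ic id)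
      fix \<omega> assume om: "\<omega> \<in> space M"
      have xo: "X \<omega> \<in> \<X>" using X_in om by simp
      have yo: "Y \<omega> \<in> \<Y>" using Y_in om by simp
      show "hb \<phi> h i ((1 - u) *\<^sub>R c + u *\<^sub>R d) (X \<omega>) (Y \<omega>)
          \<le> (1 - u) * hb \<phi> h i c (X \<omega>) (Y \<omega>) + u * hb \<phi> h i d (X \<omega>) (Y \<omega>)"
        by (rule hb_convex[OF xo _ c d u]) (simp add: A3_h yo)
    qed
    also have "\<dots> = (1 - u) * hbar i c + u * hbar i d"
      unfolding hbar_def
      by (subst Bochner_Integration.integral_add) (auto intro!: integrable_mult_right ic id)
    finally show ?thesis .
  qed
  define C1 where "C1 = C0 + lam * DR"
  define Kc where "Kc = D * C1 / eps_h + D * norm (FF a_star) / eps_h + D"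
  have main: "(\<exists>!a. isVI (As \<omega> n) (Fs \<omega> n) a) \<and>
      (\<forall>a. isVI (As \<omega> n) (Fs \<omega> n) a \<longrightarrow> lam * (norm (a - a_star))\<^sup>2 \<le> epsn n * Kc)"
    if om: "\<omega> \<in> En n" and n1: "n \<ge> 1" for \<omega> n
  proof -
    have omM: "\<omega> \<in> space M" using om by (simp add: En_def)
    have omF: "\<forall>a\<in>clBN R. norm (Fs \<omega> n a - FF a) < epsn n" using om by (simp add: En_def)
    have omA1: "AA (- epsn n) \<subseteq> As \<omega> n" using om by (simp add: En_def)
    have omA2: "As \<omega> n \<subseteq> AA (epsn n)" using om by (simp add: En_def)
    have xk: "Xs k \<omega> \<in> \<X>" for k using Xs_in omM by simp
    have yk: "Ys k \<omega> \<in> \<Y>" for k using Ys_in omM by simp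
    define e where "e = epsn n"
    have npos: "real n > 0" using n1 by simp
    have e0: "e > 0" unfolding e_def epsn_def using npos eps_d by simp
    have e1: "e \<le> eps_d"
    proof -
      have "1 \<le> real n powr alpha" using n1 alpha by (intro ge_one_powr_ge_zero) auto
      then have "real n powr (- alpha) \<le> 1" unfolding powr_minus_divide by (simp add: divide_le_eq)
      then show ?thesis unfolding e_def epsn_def using eps_d by (simp add: mult_left_le)
    qed
    have AsB: "As \<omega> n \<subseteq> clBN R" unfolding As_def clBN_def by auto
    have hs_cvx: "hs \<omega> n i ((1 - u) *\<^sub>R c + u *\<^sub>R d) \<le> (1 - u) * hs \<omega> n i c + u * hs \<omega> n i d"
      if c: "c \<in> cball 0 R" and d: "d \<in> cball 0 R" and u: "0 \<le> u" "u \<le> 1" for i c d u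
    proof -
      have "(\<Sum>k\<in>{1..n}. hb \<phi> h i ((1 - u) *\<^sub>R c + u *\<^sub>R d) (Xs k \<omega>) (Ys k \<omega>))
          \<le> (\<Sum>k\<in>{1..n}. (1 - u) * hb \<phi> h i c (Xs k \<omega>) (Ys k \<omega>) + u * hb \<phi> h i d (Xs k \<omega>) (Ys k \<omega>))"
      proof (rule sum_mono)
        fix k show "hb \<phi> h i ((1 - u) *\<^sub>R c + u *\<^sub>R d) (Xs k \<omega>) (Ys k \<omega>)
          \<le> (1 - u) * hb \<phi> h i c (Xs k \<omega>) (Ys k \<omega>) + u * hb \<phi> h i d (Xs k \<omega>) (Ys k \<omega>)"
          by (rule hb_convex[OF xk _ c d u]) (simp add: A3_h yk)
      qed
      also have "\<dots> = (1 - u) * (\<Sum>k\<in>{1..n}. hb \<phi> h i c (Xs k \<omega>) (Ys k \<omega>)) + u * (\<Sum>k\<in>{1..n}. hb \<phi> h i d (Xs k \<omega>) (Ys k \<omega>))"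
        by (simp add: sum.distrib sum_distrib_left)
      finally have "1 / real n * (\<Sum>k\<in>{1..n}. hb \<phi> h i ((1 - u) *\<^sub>R c + u *\<^sub>R d) (Xs k \<omega>) (Ys k \<omega>))
          \<le> 1 / real n * ((1 - u) * (\<Sum>k\<in>{1..n}. hb \<phi> h i c (Xs k \<omega>) (Ys k \<omega>)) + u * (\<Sum>k\<in>{1..n}. hb \<phi> h i d (Xs k \<omega>) (Ys k \<omega>)))"
        by (rule mult_left_mono) simp
      moreover have "1 / real n * ((1 - u) * (\<Sum>k\<in>{1..n}. hb \<phi> h i c (Xs k \<omega>) (Ys k \<omega>)) + u * (\<Sum>k\<in>{1..n}. hb \<phi> h i d (Xs k \<omega>) (Ys k \<omega>)))
         = (1 - u) * (1 / real n * (\<Sum>k\<in>{1..n}. hb \<phi> h i c (Xs k \<omega>) (Ys k \<omega>))) + u * (1 / real n * (\<Sum>k\<in>{1..n}. hb \<phi> h i d (Xs k \<omega>) (Ys k \<omega>)))"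
        by (simp only: distrib_left mult.left_commute)
      ultimately show ?thesis unfolding hs_def by linarith
    qed
    have hs_cont: "continuous_on (clBN R) (\<lambda>a::real^'d^'N. hs \<omega> n i (a $ i))" for i
    proof -
      have hk: "continuous_on (clBN R) (\<lambda>a::real^'d^'N. hb \<phi> h i (a $ i) (Xs k \<omega>) (Ys k \<omega>))" for k
      proof -
        have lip: "lipschitz_on Lh (Zhat_i \<phi> \<X> R) (\<lambda>t. h i t (Ys k \<omega>))" using A2_h yk by simp
        have sub: "(\<lambda>a::real^'d^'N. a $ i) ` clBN R \<subseteq> cball 0 R" using clBN_comp by auto
        show ?thesis
          by (rule continuous_on_compose2[OF hb_cont[where h=h and i=i and y="Ys k \<omega>", OF xk[of k] lip] continuous_on_component[OF continuous_on_id] sub[unfolded id_def[symmetric]]])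
      qed
      show ?thesis unfolding hs_def
        by (intro continuous_on_mult continuous_on_const continuous_on_sum hk)
    qed
    have As_eq: "As \<omega> n = (\<Inter>i. clBN R \<inter> (\<lambda>a::real^'d^'N. hs \<omega> n i (a $ i)) -` {..0})"
      unfolding As_def clBN_def by auto
    have As_closed: "closed (As \<omega> n)"
    proof -
      have "closed (clBN R \<inter> (\<lambda>a::real^'d^'N. hs \<omega> n i (a $ i)) -` {..0})" for i
        by (rule continuous_closed_preimage[OF hs_cont clBN_closed closed_atMost])
      then show ?thesis unfolding As_eq by (intro closed_INT ballI)
    qed
    have As_compact: "compact (As \<omega> n)"
      unfolding compact_eq_bounded_closed using As_closed bounded_subset[OF clBN_bounded AsB] by simp
    have As_convex: "convex (As \<omega> n)"
      unfolding convex_alt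
    proof (intro ballI allI impI)
      fix a b :: "real^'d^'N" and u :: real
      assume a: "a \<in> As \<omega> n" and b: "b \<in> As \<omega> n" and u: "0 \<le> u \<and> u \<le> 1"
      have ai: "a $ i \<in> cball 0 R" "hs \<omega> n i (a $ i) \<le> 0" for i using a unfolding As_def by auto
      have bi: "b $ i \<in> cball 0 R" "hs \<omega> n i (b $ i) \<le> 0" for i using b unfolding As_def by auto
      have "((1 - u) *\<^sub>R a + u *\<^sub>R b) $ i \<in> cball 0 R \<and> hs \<omega> n i (((1 - u) *\<^sub>R a + u *\<^sub>R b) $ i) \<le> 0" for i
      proof
        show "((1 - u) *\<^sub>R a + u *\<^sub>R b) $ i \<in> cball 0 R" using cvx[OF ai(1) bi(1)] u by simp
        have "hs \<omega> n i (((1 - u) *\<^sub>R a + u *\<^sub>R b) $ i) \<le> (1 - u) * hs \<omega> n i (a $ i) + u * hs \<omega> n i (b $ i)"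
          using hs_cvx[OF ai(1) bi(1)] u by simp
        moreover have "(1 - u) * hs \<omega> n i (a $ i) \<le> 0" using ai(2) u by (simp add: mult_nonneg_nonpos)
        moreover have "u * hs \<omega> n i (b $ i) \<le> 0" using bi(2) u by (simp add: mult_nonneg_nonpos)
        ultimately show "hs \<omega> n i (((1 - u) *\<^sub>R a + u *\<^sub>R b) $ i) \<le> 0" by linarith
      qed
      then show "(1 - u) *\<^sub>R a + u *\<^sub>R b \<in> As \<omega> n" unfolding As_def by simp
    qed
    have sAA: "s \<in> AA (- e)"
    proof -
      have "s $ i \<in> cball 0 R \<and> hbar i (s $ i) \<le> - e" for i
        using clBN_comp[OF s(1)] s(2)[of i] e1 eps_d by simp
      then show ?thesis unfolding AA_def by simp
    qed
    have As_ne: "As \<omega> n \<noteq> {}" using sAA omA1 unfolding e_def by auto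
    have Fb_c: "continuous_on (clBN R) (\<lambda>a. Fb \<phi> dJ a (Xs k \<omega>) (Ys k \<omega>))" for k
      by (rule Fb_cont[where LF=LF, OF xk]) (simp add: A2_F yk)
    have Fs_cont: "continuous_on (clBN R) (Fs \<omega> n)"
      unfolding Fs_def
      by (intro continuous_on_add continuous_on_scaleR continuous_on_const continuous_on_sum continuous_on_id Fb_c)
    have Fs_sm: "(Fs \<omega> n a - Fs \<omega> n b) \<bullet> (a - b) \<ge> lam * (norm (a - b))\<^sup>2"
      if a: "a \<in> clBN R" and b: "b \<in> clBN R" for a b
    proof -
      have eq: "Fs \<omega> n a - Fs \<omega> n b = (1 / real n) *\<^sub>R (\<Sum>k\<in>{1..n}. Fb \<phi> dJ a (Xs k \<omega>) (Ys k \<omega>) - Fb \<phi> dJ b (Xs k \<omega>) (Ys k \<omega>)) + lam *\<^sub>R (a - b)"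
        unfolding Fs_def by (simp add: sum_subtractf scaleR_diff_right algebra_simps)
      have "(Fs \<omega> n a - Fs \<omega> n b) \<bullet> (a - b) = (1 / real n) * (\<Sum>k\<in>{1..n}. (Fb \<phi> dJ a (Xs k \<omega>) (Ys k \<omega>) - Fb \<phi> dJ b (Xs k \<omega>) (Ys k \<omega>)) \<bullet> (a - b)) + lam * ((a - b) \<bullet> (a - b))"
        unfolding eq by (simp add: inner_add_left inner_sum_left)
      moreover have "(\<Sum>k\<in>{1..n}. (Fb \<phi> dJ a (Xs k \<omega>) (Ys k \<omega>) - Fb \<phi> dJ b (Xs k \<omega>) (Ys k \<omega>)) \<bullet> (a - b)) \<ge> 0"
        by (intro sum_nonneg Fb_mono[OF a b xk yk A3_F])
      moreover have "(a - b) \<bullet> (a - b) = (norm (a - b))\<^sup>2" by (simp add: power2_norm_eq_inner)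
      ultimately show ?thesis by simp
    qed
    have Fs_bd: "norm (Fs \<omega> n a) \<le> C1" if a: "a \<in> clBN R" for a
    proof -
      have "norm (\<Sum>k\<in>{1..n}. Fb \<phi> dJ a (Xs k \<omega>) (Ys k \<omega>)) \<le> (\<Sum>k\<in>{1..n}. norm (Fb \<phi> dJ a (Xs k \<omega>) (Ys k \<omega>)))"
        by (rule norm_sum)
      also have "\<dots> \<le> (\<Sum>k\<in>{1..n}. C0)" using C0 a xk yk by (intro sum_mono) simp
      also have "\<dots> = real n * C0" by simp
      finally have s1: "norm ((1 / real n) *\<^sub>R (\<Sum>k\<in>{1..n}. Fb \<phi> dJ a (Xs k \<omega>) (Ys k \<omega>))) \<le> C0"
        using npos by (simp add: divide_le_eq mult.commute)
      have s2: "norm (lam *\<^sub>R a) \<le> lam * DR" using nB[OF a] lam_pos by (simp add: mult_left_mono)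
      show ?thesis unfolding Fs_def C1_def using norm_triangle_le[OF add_mono[OF s1 s2]] by simp
    qed
    have exi: "\<exists>a. isVI (As \<omega> n) (Fs \<omega> n) a"
      by (rule VI_exists[OF As_compact As_convex As_ne continuous_on_subset[OF Fs_cont AsB]])
    have uni: "a = b" if "isVI (As \<omega> n) (Fs \<omega> n) a" "isVI (As \<omega> n) (Fs \<omega> n) b" for a b
    proof (rule VI_unique[OF _ lam_pos that])
      show "\<forall>a\<in>As \<omega> n. \<forall>b\<in>As \<omega> n. lam * (norm (a - b))\<^sup>2 \<le> (Fs \<omega> n a - Fs \<omega> n b) \<bullet> (a - b)"
        using Fs_sm AsB by blast
    qed
    have est: "lam * (norm (a - a_star))\<^sup>2 \<le> epsn n * Kc" if aVI: "isVI (As \<omega> n) (Fs \<omega> n) a" for a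
    proof -
      define t where "t = e / eps_h"
      have t0: "0 \<le> t" "t \<le> 1" unfolding t_def using e0 e1 eps_d by auto
      have aK: "a \<in> As \<omega> n" and aV: "\<forall>b\<in>As \<omega> n. Fs \<omega> n a \<bullet> (b - a) \<ge> 0" using aVI unfolding isVI_def by auto
      have acl: "a \<in> clBN R" using aK AsB by auto
      have aAA: "a \<in> AA e" using aK omA2 unfolding e_def by auto
      define b where "b = (1 - t) *\<^sub>R a_star + t *\<^sub>R s"
      define c where "c = (1 - t) *\<^sub>R a + t *\<^sub>R s"
      have bAA: "b \<in> AA (- e)"
      proof -
        have "b $ i \<in> cball 0 R \<and> hbar i (b $ i) \<le> - e" for i
        proof
          have a1: "a_star $ i \<in> cball 0 R" using clBN_comp[OF as_cl] .
          have s1: "s $ i \<in> cball 0 R" using clBN_comp[OF s(1)] .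
          show "b $ i \<in> cball 0 R" unfolding b_def using cvx[OF a1 s1 t0] by simp
          have "hbar i (b $ i) \<le> (1 - t) * hbar i (a_star $ i) + t * hbar i (s $ i)"
            unfolding b_def using hbar_cvx[OF a1 s1 t0] by simp
          moreover have "hbar i (a_star $ i) \<le> 0" using as(1) unfolding AA_def by simp
          moreover have "t * hbar i (s $ i) \<le> t * (- eps_h)" using mult_left_mono[OF s(2)[of i] t0(1)] .
          moreover have "t * eps_h = e" unfolding t_def using eps_h_pos by simp
          moreover have "(1 - t) * hbar i (a_star $ i) \<le> 0" using calculation(2) t0 by (simp add: mult_nonneg_nonpos)
          moreover have "t * - eps_h = - (t * eps_h)" by simp
          ultimately show "hbar i (b $ i) \<le> - e" by linarith
        qed
        then show ?thesis unfolding AA_def by simp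
      qed
      have cAA: "c \<in> AA 0"
      proof -
        have "c $ i \<in> cball 0 R \<and> hbar i (c $ i) \<le> 0" for i
        proof
          have a1: "a $ i \<in> cball 0 R" using clBN_comp[OF acl] .
          have s1: "s $ i \<in> cball 0 R" using clBN_comp[OF s(1)] .
          show "c $ i \<in> cball 0 R" unfolding c_def using cvx[OF a1 s1 t0] by simp
          have "hbar i (c $ i) \<le> (1 - t) * hbar i (a $ i) + t * hbar i (s $ i)"
            unfolding c_def using hbar_cvx[OF a1 s1 t0] by simp
          moreover have "hbar i (a $ i) \<le> e" using aAA unfolding AA_def by simp
          moreover have "(1 - t) * hbar i (a $ i) \<le> (1 - t) * e" using calculation(2) t0 by (simp add: mult_left_mono)
          moreover have "t * hbar i (s $ i) \<le> t * (- eps_h)" using mult_left_mono[OF s(2)[of i] t0(1)] .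
          moreover have "t * eps_h = e" unfolding t_def using eps_h_pos by simp
          moreover have "t * - eps_h = - (t * eps_h)" by simp
          moreover have "(1 - t) * e \<le> e" using t0 e0 by (simp add: mult_left_le_one_le)
          ultimately show "hbar i (c $ i) \<le> 0" by linarith
        qed
        then show ?thesis unfolding AA_def by simp
      qed
      have bK: "b \<in> As \<omega> n" using bAA omA1 unfolding e_def by auto
      have "lam * (norm (a - a_star))\<^sup>2 \<le> t * D * C1 + t * D * norm (FF a_star) + e * D"
      proof (rule key_estimate[where Gn = "Fs \<omega> n" and G = FF and b = b and c = c and s = s])
        show "0 \<le> Fs \<omega> n a \<bullet> (b - a)" using aV bK by simp
        show "0 \<le> FF a_star \<bullet> (c - a_star)" using as(2) cAA by simp
        show "b = (1 - t) *\<^sub>R a_star + t *\<^sub>R s" by (rule b_def)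
        show "c = (1 - t) *\<^sub>R a + t *\<^sub>R s" by (rule c_def)
        show "lam * (norm (a - a_star))\<^sup>2 \<le> (Fs \<omega> n a - Fs \<omega> n a_star) \<bullet> (a - a_star)"
          by (rule Fs_sm[OF acl as_cl])
        show "norm (Fs \<omega> n a) \<le> C1" by (rule Fs_bd[OF acl])
        show "norm (Fs \<omega> n a_star - FF a_star) \<le> e" using omF as_cl unfolding e_def by (simp add: less_imp_le)
        show "norm (a - a_star) \<le> D" by (rule nD[OF acl as_cl])
        show "norm (s - a_star) \<le> D" by (rule nD[OF s(1) as_cl])
        show "norm (s - a) \<le> D" by (rule nD[OF s(1) acl])
        show "0 \<le> t" by (rule t0(1))
      qed
      also have "\<dots> = e * Kc" unfolding t_def Kc_def using eps_d by (simp add: field_simps)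
      finally show ?thesis unfolding e_def .
    qed
    show ?thesis using exi uni est by blast
  qed
  have pw: "(\<lambda>n. real n powr (- alpha)) \<longlonglongrightarrow> 0"
    by (rule tendsto_neg_powr[OF _ filterlim_real_sequentially]) (use alpha in simp)
  define g where "g n = sqrt (epsn n * Kc / lam)" for n
  have "(\<lambda>n. sqrt (eps_d * real n powr (- alpha) * Kc / lam)) \<longlonglongrightarrow> sqrt (eps_d * 0 * Kc / lam)"
    by (intro tendsto_intros pw) (use lam_pos in simp)
  then have g0: "g \<longlonglongrightarrow> 0" unfolding g_def epsn_def by simp
  show ?thesis
  proof (intro ballI conjI allI impI)
    fix \<omega> assume "\<omega> \<in> Omega_t"
    then have "\<exists>nw::nat. nw \<ge> 1 \<and> (\<forall>n>nw. \<omega> \<in> En n)" by (simp add: Omega_t_def)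
    then obtain nw where nw: "nw \<ge> 1" "\<forall>n>nw. \<omega> \<in> En n" by blast
    have mn: "(\<exists>!a. isVI (As \<omega> n) (Fs \<omega> n) a) \<and>
      (\<forall>a. isVI (As \<omega> n) (Fs \<omega> n) a \<longrightarrow> lam * (norm (a - a_star))\<^sup>2 \<le> epsn n * Kc)" if "n > nw" for n
    proof -
      have "\<omega> \<in> En n" using nw(2) that by simp
      moreover have "n \<ge> 1" using nw(1) that by simp
      ultimately show ?thesis by (rule main)
    qed
    have bd: "norm (a - a_star) \<le> g n" if "n > nw" "isVI (As \<omega> n) (Fs \<omega> n) a" for n a
    proof -
      have "lam * (norm (a - a_star))\<^sup>2 \<le> epsn n * Kc" using conjunct2[OF mn[OF that(1)], rule_format, OF that(2)] .
      then have "(norm (a - a_star))\<^sup>2 \<le> epsn n * Kc / lam" using lam_pos by (simp add: pos_le_divide_eq mult.commute)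
      then show ?thesis unfolding g_def by (rule real_le_rsqrt)
    qed
    show "\<exists>N\<^sub>\<omega>::nat. N\<^sub>\<omega> \<ge> 1 \<and> (\<forall>n\<ge>N\<^sub>\<omega>. (\<exists>!a. isVI (As \<omega> n) (Fs \<omega> n) a) \<and> (\<forall>a. isVI (As \<omega> n) (Fs \<omega> n) a \<longrightarrow> a \<in> S))"
      if S: "open S \<and> a_star \<in> S" for S
    proof -
      from S have So: "open S" "a_star \<in> S" by auto
      then obtain r where r: "r > 0" "ball a_star r \<subseteq> S" by (rule openE)
      have "eventually (\<lambda>n. g n < r) sequentially" using order_tendstoD(2)[OF g0 r(1)] .
      then obtain N0 where N0: "\<And>n. n \<ge> N0 \<Longrightarrow> g n < r" unfolding eventually_sequentially by blast
      define N where "N = max N0 (nw + 1)"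
      have N1: "N \<ge> 1" unfolding N_def by simp
      have NN:  "(\<exists>!a. isVI (As \<omega> n) (Fs \<omega> n) a) \<and> (\<forall>a. isVI (As \<omega> n) (Fs \<omega> n) a \<longrightarrow> a \<in> S)"
        if "n \<ge> N" for n
      proof
        have n1: "n > nw" "n \<ge> N0" using that unfolding N_def by auto
        show "\<exists>!a. isVI (As \<omega> n) (Fs \<omega> n) a" using conjunct1[OF mn[OF n1(1)]] .
        show "\<forall>a. isVI (As \<omega> n) (Fs \<omega> n) a \<longrightarrow> a \<in> S"
        proof (intro allI impI)
          fix a assume "isVI (As \<omega> n) (Fs \<omega> n) a"
          then have "norm (a - a_star) < r" using bd[OF n1(1)] N0[OF n1(2)] by (meson le_less_trans)
          then have "a \<in> ball a_star r" by (simp add: dist_norm norm_minus_commute)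
          then show "a \<in> S" using r(2) by (rule subsetD[rotated])
        qed
      qed
      show ?thesis using N1 NN by (intro exI[of _ N] conjI allI impI) auto
    qed
    show "(\<lambda>n. norm ((THE a. isVI (As \<omega> n) (Fs \<omega> n) a) - a_star)) \<longlonglongrightarrow> 0"
    proof (rule Lim_null_comparison[OF _ g0])
      show "\<forall>\<^sub>F n in sequentially. norm (norm ((THE a. isVI (As \<omega> n) (Fs \<omega> n) a) - a_star)) \<le> g n"
        unfolding eventually_sequentially
      proof (intro exI allI impI)
        fix n assume "Suc nw \<le> n"
        then have n1: "n > nw" by simp
        have thv: "isVI (As \<omega> n) (Fs \<omega> n) (THE a. isVI (As \<omega> n) (Fs \<omega> n) a)"
          by (rule theI'[OF conjunct1[OF mn[OF n1]]])
        show "norm (norm ((THE a. isVI (As \<omega> n) (Fs \<omega> n) a) - a_star)) \<le> g n"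
          using bd[OF n1 thv] by simp
      qed
    qed
  qed
qed

end
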